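(* Let $\psi$ be a neighbor function with distance parameters $\sigma_1,\dots,\sigma_m$, let $\mu>0$, and let $Q_{\langle G,A_i\rangle}$ be a group-by sum query with disjoint groups $g_1,\dots,g_L$ of establishments. Let $u_{j,i}$ be public upper-bound values attached to each establishment $e_j$. The probably-no-clipping mechanism for $Q_{\langle G,A_i\rangle}$ with budget $\mu$ is: (1) for each group $g_\ell$ compute $u^*_\ell=\max_{e_j\in g_\ell}u_{j,i}$; (2) compute $\Delta_\ell=u^*_\ell-\psi^{-1}\big(\max(0,\psi(u^*_\ell)-\sigma_i)\big)$; (3) compute $T_{g_\ell}=\sum_{e_j\in g_\ell}\min(r_j[A_i],u^*_\ell)$; (4) release, for each group $g_\ell$, $T_{g_\ell}+N(0,(\Delta_\ell/\mu)^2)$ (independent noise across groups) together with the variance $(\Delta_\ell/\mu)^2$. This mechanism satisfies $\mu$-Gaussian Establishment DP with neighbor function $\psi$ and distance parameters $\sigma_1,\dots,\sigma_m$.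
   Context: A neighbor function is a function $\psi:\mathbb{R}_{\geq 0}\to\mathbb{R}$ that is strictly increasing, continuous, concave, and such that $x\mapsto\psi(e^{x})$ is convex. An establishment record $r_j$ (for establishment $e_j$) consists of public attribute values and nonnegative real confidential attribute values $r_j[A_1],\dots,r_j[A_m]$. A dataset is a finite collection of such records. Given nonnegative distance parameters $\sigma_1,\dots,\sigma_m$, a record $r$ is $\psi$-close to $r'$ if their public attribute values coincide and $|\psi(r[A_k])-\psi(r'[A_k])|\leq\sigma_k$ for all $k$. Datasets $D_1,D_2$ are $\psi$-neighbors if one is obtained from the other by replacing one record $r$ with a record $r'$ that is $\psi$-close to $r$. A mechanism $M$ satisfies $\mu$-Gaussian Establishment DP (with $\psi$ and $\sigma_1,\dots,\sigma_m$) if for all pairs of $\psi$-neighbors $D_1,D_2$ and all measurable $S$, $\Phi^{-1}(P(M(D_2)\in S))\leq\Phi^{-1}(P(M(D_1)\in S))+\mu$, with $\Phi$ the standard normal CDF. A group-by sum query $Q_{\langle G,A_i\rangle}$ partitions establishments into groups via a function $G$ of the public attributes only. The upper bounds $u_{j,i}$ are public quantities (in the paper they come from an earlier, separately accounted noisy release of each $\psi(r_j[A_i])$); in this statement they are inputs to the mechanism and are not recomputed from the confidential data. *)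

theory Defs
  imports "HOL-Probability.Probability"
begin

definition neighbor_function :: "(real \<Rightarrow> real) \<Rightarrow> bool" where
  "neighbor_function \<psi> \<longleftrightarrow>
     strict_mono_on {0..} \<psi> \<and> continuous_on {0..} \<psi> \<and> concave_on {0..} \<psi> \<and>
     convex_on UNIV (\<lambda>x. \<psi> (exp x))"

definition psi_inv :: "(real \<Rightarrow> real) \<Rightarrow> real \<Rightarrow> real" where
  "psi_inv \<psi> y = (THE x. 0 \<le> x \<and> \<psi> x = y)"

(* A record: public attributes and confidential attributes indexed by k *)
type_synonym 'p erecord = "'p \<times> (nat \<Rightarrow> real)"

definition psi_close :: "(real \<Rightarrow> real) \<Rightarrow> nat \<Rightarrow> (nat \<Rightarrow> real) \<Rightarrow> 'p erecord \<Rightarrow> 'p erecord \<Rightarrow> bool" where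
  "psi_close \<psi> m \<sigma> r r' \<longleftrightarrow> fst r = fst r' \<and>
     (\<forall>k\<in>{1..m}. \<bar>\<psi> (snd r k) - \<psi> (snd r' k)\<bar> \<le> \<sigma> k)"

definition valid_dataset :: "nat \<Rightarrow> 'e set \<Rightarrow> ('e \<Rightarrow> 'p erecord) \<Rightarrow> bool" where
  "valid_dataset m E D \<longleftrightarrow> (\<forall>j\<in>E. \<forall>k\<in>{1..m}. 0 \<le> snd (D j) k)"

definition psi_neighbors :: "(real \<Rightarrow> real) \<Rightarrow> nat \<Rightarrow> (nat \<Rightarrow> real) \<Rightarrow> 'e set \<Rightarrow>
    ('e \<Rightarrow> 'p erecord) \<Rightarrow> ('e \<Rightarrow> 'p erecord) \<Rightarrow> bool" where
  "psi_neighbors \<psi> m \<sigma> E D1 D2 \<longleftrightarrow>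
     (\<exists>j\<in>E. (\<forall>k\<in>E - {j}. D1 k = D2 k) \<and> psi_close \<psi> m \<sigma> (D1 j) (D2 j))"

definition Phi :: "real \<Rightarrow> real" where
  "Phi x = measure (density lborel std_normal_density) {..x}"

definition Phi_inv :: "real \<Rightarrow> ereal" where
  "Phi_inv p = (if p \<le> 0 then -\<infinity> else if 1 \<le> p then \<infinity> else ereal (THE x. Phi x = p))"

definition gaussian_EDP :: "(('e \<Rightarrow> 'p erecord) \<Rightarrow> 'o measure) \<Rightarrow> real \<Rightarrow>
    (real \<Rightarrow> real) \<Rightarrow> nat \<Rightarrow> (nat \<Rightarrow> real) \<Rightarrow> 'e set \<Rightarrow> bool" where
  "gaussian_EDP M \<mu> \<psi> m \<sigma> E \<longleftrightarrow>
     (\<forall>D1 D2. valid_dataset m E D1 \<and> valid_dataset m E D2 \<and> psi_neighbors \<psi> m \<sigma> E D1 D2 \<longrightarrow>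
        (\<forall>S \<in> sets (M D1). Phi_inv (measure (M D2) S) \<le> Phi_inv (measure (M D1) S) + ereal \<mu>))"

definition gaussian :: "real \<Rightarrow> real \<Rightarrow> real measure" where
  "gaussian c s = (if s = 0 then return borel c else density lborel (normal_density c s))"

definition group_labels :: "('p \<Rightarrow> 'g) \<Rightarrow> 'e set \<Rightarrow> ('e \<Rightarrow> 'p erecord) \<Rightarrow> 'g set" where
  "group_labels G E D = (\<lambda>j. G (fst (D j))) ` E"

definition group_members :: "('p \<Rightarrow> 'g) \<Rightarrow> 'e set \<Rightarrow> ('e \<Rightarrow> 'p erecord) \<Rightarrow> 'g \<Rightarrow> 'e set" where
  "group_members G E D g = {j \<in> E. G (fst (D j)) = g}"

definition u_star :: "('p \<Rightarrow> 'g) \<Rightarrow> 'e set \<Rightarrow> ('e \<Rightarrow> nat \<Rightarrow> real) \<Rightarrow> nat \<Rightarrow>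
    ('e \<Rightarrow> 'p erecord) \<Rightarrow> 'g \<Rightarrow> real" where
  "u_star G E u i D g = Max ((\<lambda>j. u j i) ` group_members G E D g)"

(* step (2); the lower clamp is psi(0) (= 0 under normalisation psi(0)=0) *)
definition clip_delta :: "(real \<Rightarrow> real) \<Rightarrow> real \<Rightarrow> real \<Rightarrow> real" where
  "clip_delta \<psi> s ustar = ustar - psi_inv \<psi> (max (\<psi> 0) (\<psi> ustar - s))"

definition clipped_total :: "('p \<Rightarrow> 'g) \<Rightarrow> 'e set \<Rightarrow> ('e \<Rightarrow> nat \<Rightarrow> real) \<Rightarrow> nat \<Rightarrow>
    ('e \<Rightarrow> 'p erecord) \<Rightarrow> 'g \<Rightarrow> real" where
  "clipped_total G E u i D g =
     (\<Sum>j\<in>group_members G E D g. min (snd (D j) i) (u_star G E u i D g))"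

definition pnc_mechanism :: "(real \<Rightarrow> real) \<Rightarrow> (nat \<Rightarrow> real) \<Rightarrow> real \<Rightarrow> ('p \<Rightarrow> 'g) \<Rightarrow>
    'e set \<Rightarrow> ('e \<Rightarrow> nat \<Rightarrow> real) \<Rightarrow> nat \<Rightarrow> ('e \<Rightarrow> 'p erecord) \<Rightarrow> ('g \<Rightarrow> real \<times> real) measure" where
  "pnc_mechanism \<psi> \<sigma> \<mu> G E u i D =
     (\<Pi>\<^sub>M g\<in>group_labels G E D.
        (let s = clip_delta \<psi> (\<sigma> i) (u_star G E u i D g) / \<mu> in
         distr (gaussian (clipped_total G E u i D g) s) (borel \<Otimes>\<^sub>M borel) (\<lambda>y. (y, s\<^sup>2))))"

end

theory Submission imports Defs begin

abbreviation "NN \<equiv> density lborel std_normal_density"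

lemma NN_rd: "real_distribution NN"
  unfolding real_distribution_def real_distribution_axioms_def
  using prob_space_normal_density by auto

lemma Phi_cdf: "Phi = cdf NN"
  by (auto simp: Phi_def cdf_def)

lemma Phi_cont: "isCont Phi x"
proof -
  interpret real_distribution NN by (rule NN_rd)
  have "emeasure NN {x} = 0"
    by (subst emeasure_density) (auto intro!: nn_integral_null_set null_sets_density_iff[THEN iffD2] simp: )
  then have "measure NN {x} = 0" by (simp add: measure_def)
  then show ?thesis unfolding Phi_cdf using isCont_cdf by blast
qed

lemma Phi_strict: assumes "x < y" shows "Phi x < Phi y"
proof -
  interpret real_distribution NN by (rule NN_rd)
  define M where "M = max (x^2) (y^2)"
  define c where "c = (1 / sqrt (2 * pi)) * exp (- M / 2)"
  have cpos: "c > 0" unfolding c_def by simp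
  have le: "c \<le> std_normal_density t" if "t \<in> {x<..y}" for t
  proof -
    have "t^2 \<le> M" using that unfolding M_def
      by (smt (verit, best) greaterThanAtMost_iff power2_le_iff_abs_le abs_le_iff max.coboundedI1 max.coboundedI2 real_sqrt_abs real_sqrt_le_iff)
    then have "exp (- M / 2) \<le> exp (- (t^2)/2)" by simp
    then show ?thesis unfolding c_def std_normal_density_def by (simp add: divide_right_mono)
  qed
  have "ennreal (c * (y - x)) = (\<integral>\<^sup>+ t. ennreal c * indicator {x<..y} t \<partial>lborel)"
    using assms cpos by (simp add: nn_integral_cmult_indicator ennreal_mult)
  also have "\<dots> \<le> (\<integral>\<^sup>+ t. ennreal (std_normal_density t) * indicator {x<..y} t \<partial>lborel)"
    using le by (intro nn_integral_mono) (auto split: split_indicator)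
  also have "\<dots> = emeasure NN {x<..y}"
    by (subst emeasure_density) auto
  finally have "ennreal (c * (y - x)) \<le> emeasure NN {x<..y}" .
  then have "c * (y - x) \<le> measure NN {x<..y}"
    by (simp add: emeasure_eq_measure)
  moreover have "c * (y - x) > 0" using cpos assms by simp
  ultimately show ?thesis unfolding Phi_cdf using cdf_diff_eq[OF assms] by simp
qed

lemma Phi_mono_strict: "strict_mono Phi"
  using Phi_strict by (simp add: strict_mono_def)

lemma Phi_top: "(Phi \<longlongrightarrow> 1) at_top"
proof -
  interpret real_distribution NN by (rule NN_rd)
  show ?thesis unfolding Phi_cdf by (rule cdf_lim_at_top_prob)
qed

lemma Phi_bot: "(Phi \<longlongrightarrow> 0) at_bot"
proof -
  interpret real_distribution NN by (rule NN_rd)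
  show ?thesis unfolding Phi_cdf by (rule cdf_lim_at_bot)
qed

lemma Phi_nonneg: "0 \<le> Phi x" unfolding Phi_def by simp

lemma Phi_le1: "Phi x \<le> 1"
proof -
  interpret real_distribution NN by (rule NN_rd)
  show ?thesis unfolding Phi_cdf by (rule cdf_bounded_prob)
qed

lemma Phi_pos: "0 < Phi x"
  using Phi_strict[of "x - 1" x] Phi_nonneg[of "x-1"] by simp

lemma Phi_lt1: "Phi x < 1"
  using Phi_strict[of x "x + 1"] Phi_le1[of "x+1"] by simp

lemma Phi_surj: assumes "0 < p" "p < 1" shows "\<exists>a. Phi a = p"
proof -
  have "eventually (\<lambda>x. Phi x < p) at_bot"
    using order_tendstoD(2)[OF Phi_bot assms(1)] .
  then obtain a where a: "Phi a < p" by (meson eventually_at_bot_linorder order_refl)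
  have "eventually (\<lambda>x. Phi x > p) at_top"
    using order_tendstoD(1)[OF Phi_top assms(2)] .
  then obtain b where b: "Phi b > p" by (meson eventually_at_top_linorder order_refl)
  have ab: "a \<le> b" using a b Phi_strict by (meson less_le_not_le linorder_le_less_linear order.strict_trans)
  have "continuous_on {a..b} Phi" using Phi_cont by (simp add: continuous_at_imp_continuous_on)
  then show ?thesis using IVT'[of Phi a p b] a b ab by auto
qed

lemma Phi_inv_Phi: "Phi_inv (Phi x) = ereal x"
proof -
  have "(THE y. Phi y = Phi x) = x"
    using Phi_mono_strict by (auto intro!: the_equality dest: strict_mono_eq)
  then show ?thesis unfolding Phi_inv_def using Phi_pos[of x] Phi_lt1[of x] by auto
qed

lemma Phi_inv_mono: assumes "p \<le> q" shows "Phi_inv p \<le> Phi_inv q"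
proof (cases "p \<le> 0 \<or> 1 \<le> q")
  case True then show ?thesis unfolding Phi_inv_def by auto
next
  case False
  then have "0 < p" "q < 1" "p < 1" "0 < q" using assms by auto
  then obtain a b where a: "Phi a = p" and b: "Phi b = q" using Phi_surj by metis
  have "a \<le> b" using a b assms Phi_strict by (meson linorder_not_less)
  then show ?thesis using a b Phi_inv_Phi[of a] Phi_inv_Phi[of b] by (metis ereal_less_eq(3))
qed


lemma distr_cdf:
  assumes "distributed P lborel Z std_normal_density"
  shows "measure P {\<omega>\<in>space P. Z \<omega> \<le> a} = Phi a"
proof -
  have d: "distr P lborel Z = NN" and m: "Z \<in> measurable P lborel"
    using assms unfolding distributed_def by auto
  have "Phi a = measure (distr P lborel Z) {..a}" using d by (simp add: Phi_def)
  also have "\<dots> = measure P (Z -` {..a} \<inter> space P)"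
    using m by (subst measure_distr) auto
  also have "Z -` {..a} \<inter> space P = {\<omega>\<in>space P. Z \<omega> \<le> a}" by auto
  finally show ?thesis by simp
qed

lemma NP:
  fixes P P' :: "'a measure" and Z :: "'a \<Rightarrow> real"
  assumes PP: "prob_space P" and dZ: "distributed P lborel Z std_normal_density"
   and dZ': "distributed P' lborel (\<lambda>\<omega>. Z \<omega> + e) std_normal_density"
   and Pd: "P' = density P (\<lambda>\<omega>. ennreal (exp (- e * Z \<omega> - e^2/2)))"
   and e: "0 \<le> e" "e \<le> \<mu>" and S: "S \<in> sets P"
  shows "Phi_inv (measure P' S) \<le> Phi_inv (measure P S) + ereal \<mu>"
proof -
  interpret P: prob_space P by (rule PP)
  have Zm[measurable]: "Z \<in> borel_measurable P"
    using dZ unfolding distributed_def by auto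
  have sp: "space P' = space P" and ss: "sets P' = sets P" using Pd by auto
  have "emeasure P' (space P') = 1"
  proof -
    have "emeasure P' (space P') = emeasure (distr P' lborel (\<lambda>\<omega>. Z \<omega> + e)) UNIV"
      using dZ' unfolding distributed_def by (subst emeasure_distr) auto
    also have "\<dots> = emeasure NN UNIV" using dZ' unfolding distributed_def by simp
    also have "\<dots> = 1" using prob_space.emeasure_space_1[OF prob_space_normal_density] by simp
    finally show ?thesis .
  qed
  then interpret P': prob_space P' by (rule prob_spaceI)
  define p where "p = measure P S"
  show ?thesis
  proof (cases "p \<le> 0")
    case True
    then have "emeasure P S = 0" unfolding p_def using P.emeasure_eq_measure
      by (simp add: measure_le_0_iff)
    then have "S \<in> null_sets P" using S by auto
    then have "emeasure P' S = 0" unfolding Pd using S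
      by (subst emeasure_density) (auto intro!: nn_integral_null_set)
    then have "measure P' S = 0" by (simp add: measure_def)
    then show ?thesis using True unfolding p_def Phi_inv_def by simp
  next
    case False
    note pos = this
    show ?thesis
    proof (cases "1 \<le> p")
      case True then show ?thesis using pos unfolding p_def Phi_inv_def by simp
    next
      case False
      with pos obtain a where a: "Phi a = p" using Phi_surj by force
      define H where "H = {\<omega>\<in>space P. Z \<omega> \<le> a}"
      have Hs[measurable]: "H \<in> sets P" unfolding H_def by measurable
      have PH: "measure P H = p" unfolding H_def using distr_cdf[OF dZ] a by simp
      define t where "t = exp (- e * a - e^2/2)"
      define L where "L = (\<lambda>\<omega>. ennreal (exp (- e * Z \<omega> - e^2/2)))"
      have Lm[measurable]: "L \<in> borel_measurable P" unfolding L_def by measurable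
      have pw: "indicator S \<omega> * L \<omega> + ennreal t * indicator H \<omega>
                 \<le> indicator H \<omega> * L \<omega> + ennreal t * indicator S \<omega>" if "\<omega> \<in> space P" for \<omega>
      proof (cases "Z \<omega> \<le> a")
        case True
        then have "- e * a \<le> - e * Z \<omega>" using e by (simp add: mult_left_mono)
        then have "t \<le> exp (- e * Z \<omega> - e^2/2)" unfolding t_def by simp
        then have "ennreal t \<le> L \<omega>" unfolding L_def by (simp add: ennreal_leI)
        moreover have "\<omega> \<in> H" using True that unfolding H_def by auto
        ultimately show ?thesis by (auto split: split_indicator simp: add.commute)
      next
        case False
        then have "- e * Z \<omega> \<le> - e * a" using e by (simp add: mult_left_mono)
        then have "exp (- e * Z \<omega> - e^2/2) \<le> t" unfolding t_def by simp
        then have "L \<omega> \<le> ennreal t" unfolding L_def by (simp add: ennreal_leI)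
        moreover have "\<omega> \<notin> H" using False that unfolding H_def by auto
        ultimately show ?thesis by (auto split: split_indicator simp: add.commute)
      qed
      have eP': "emeasure P' A = (\<integral>\<^sup>+ \<omega>. indicator A \<omega> * L \<omega> \<partial>P)" if "A \<in> sets P" for A
        unfolding Pd L_def using that by (subst emeasure_density) (auto simp: mult.commute)
      have "emeasure P' S + ennreal t * emeasure P H
            = (\<integral>\<^sup>+ \<omega>. indicator S \<omega> * L \<omega> + ennreal t * indicator H \<omega> \<partial>P)"
        using S by (subst nn_integral_add) (auto simp: eP' nn_integral_cmult_indicator)
      also have "\<dots> \<le> (\<integral>\<^sup>+ \<omega>. indicator H \<omega> * L \<omega> + ennreal t * indicator S \<omega> \<partial>P)"
        by (rule nn_integral_mono) (rule pw)
      also have "\<dots> = emeasure P' H + ennreal t * emeasure P S"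
        using S by (subst nn_integral_add) (auto simp: eP' nn_integral_cmult_indicator)
      finally have "ennreal (measure P' S) + ennreal (t * p) \<le> ennreal (measure P' H) + ennreal (t * p)"
        using S ss PH unfolding p_def
        by (simp add: P.emeasure_eq_measure P'.emeasure_eq_measure ennreal_mult' t_def)
      then have "measure P' S \<le> measure P' H"
        by (simp add: ennreal_plus[symmetric] del: ennreal_plus)
      also have "H = {\<omega>\<in>space P'. Z \<omega> + e \<le> a + e}" unfolding H_def sp by auto
      also have "measure P' \<dots> = Phi (a + e)" by (rule distr_cdf[OF dZ'])
      also have "\<dots> \<le> Phi (a + \<mu>)" using e Phi_strict by (metis add_left_mono order_le_less)
      finally have "Phi_inv (measure P' S) \<le> Phi_inv (Phi (a + \<mu>))" by (rule Phi_inv_mono)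
      moreover have "Phi_inv (measure P S) = ereal a" using a Phi_inv_Phi[of a] unfolding p_def by simp
      ultimately show ?thesis by (simp add: Phi_inv_Phi)
    qed
  qed
qed


lemma concave_incr:
  fixes f :: "real \<Rightarrow> real"
  assumes cc: "concave_on {0..} f" and xy: "0 \<le> x" "x \<le> y" and h: "0 \<le> h"
  shows "f (y+h) - f y \<le> f (x+h) - f x"
proof (cases "y + h - x = 0")
  case True then have "x = y" "h = 0" using xy h by auto
  then show ?thesis by simp
next
  case False
  define D where "D = y + h - x"
  have D: "D > 0" using False xy h unfolding D_def by auto
  define t1 where "t1 = (y - x) / D"
  define t2 where "t2 = h / D"
  have t1: "0 \<le> t1" "t1 \<le> 1" using D xy h unfolding t1_def D_def by (auto simp: field_simps)
  have t2: "0 \<le> t2" "t2 \<le> 1" using D xy h unfolding t2_def D_def by (auto simp: field_simps)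
  have A: "x \<in> {0..}" "y + h \<in> {0..}" using xy h by auto
  have "t1 * D = y - x" "t2 * D = h" using D unfolding t1_def t2_def by auto
  moreover have "(1 - t) *\<^sub>R x + t *\<^sub>R (y + h) = x + t * D" for t unfolding D_def by (simp add: algebra_simps)
  ultimately have e1: "(1 - t1) *\<^sub>R x + t1 *\<^sub>R (y + h) = y"
     and e2: "(1 - t2) *\<^sub>R x + t2 *\<^sub>R (y + h) = x + h" by auto
  have i1: "f y \<ge> (1 - t1) * f x + t1 * f (y+h)"
    using concave_onD[OF cc t1 A] e1 by simp
  have i2: "f (x+h) \<ge> (1 - t2) * f x + t2 * f (y+h)"
    using concave_onD[OF cc t2 A] e2 by simp
  have "t1 + t2 = (y - x + h) / D" unfolding t1_def t2_def by (simp add: add_divide_distrib)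
  then have s: "t1 + t2 = 1" using D unfolding D_def by simp
  have "(1 - t1) * f x + t1 * f (y+h) + ((1 - t2) * f x + t2 * f (y+h))
     = (2 - (t1+t2)) * f x + (t1+t2) * f (y+h)" by (simp add: algebra_simps)
  also have "\<dots> = f x + f (y+h)" using s by simp
  finally show ?thesis using i1 i2 by linarith
qed

lemma smo_inj: "strict_mono_on A f \<Longrightarrow> x \<in> A \<Longrightarrow> y \<in> A \<Longrightarrow> f x = (f y :: real) \<Longrightarrow> x = (y::real)"
  by (metis linorder_neqE_linordered_idom order_less_irrefl strict_mono_onD)

lemma psi_inv_prop:
  assumes nf: "neighbor_function \<psi>" and u: "0 \<le> u" and y: "\<psi> 0 \<le> y" "y \<le> \<psi> u"
  shows "0 \<le> psi_inv \<psi> y \<and> psi_inv \<psi> y \<le> u \<and> \<psi> (psi_inv \<psi> y) = y"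
proof -
  have sm: "strict_mono_on {0..} \<psi>" and co: "continuous_on {0..} \<psi>"
    using nf unfolding neighbor_function_def by auto
  have "continuous_on {0..u} \<psi>" using co by (rule continuous_on_subset) auto
  then obtain x where x: "0 \<le> x" "x \<le> u" "\<psi> x = y" using IVT'[of \<psi> 0 y u] y u by auto
  have "psi_inv \<psi> y = x" unfolding psi_inv_def
    using x smo_inj[OF sm] by (intro the_equality) auto
  then show ?thesis using x by simp
qed

lemma sens_ord:
  assumes nf: "neighbor_function \<psi>" and ab: "0 \<le> a" "a \<le> b" "b \<le> u" and s: "0 \<le> \<sigma>"
    and d: "\<psi> b - \<psi> a \<le> \<sigma>"
  shows "b - a \<le> clip_delta \<psi> \<sigma> u"
proof -
  have sm: "strict_mono_on {0..} \<psi>" and cc: "concave_on {0..} \<psi>"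
    using nf unfolding neighbor_function_def by auto
  have u: "0 \<le> u" using ab by simp
  have mono: "\<psi> x \<le> \<psi> y" if "0 \<le> x" "x \<le> y" for x y
    using sm that by (metis atLeast_iff order.trans order_le_less order_refl strict_mono_onD)
  define y where "y = max (\<psi> 0) (\<psi> u - \<sigma>)"
  have y1: "\<psi> 0 \<le> y" "y \<le> \<psi> u" unfolding y_def using mono[OF _ u] s by auto
  define v where "v = psi_inv \<psi> y"
  have v: "0 \<le> v" "v \<le> u" "\<psi> v = y" using psi_inv_prop[OF nf u y1] unfolding v_def by auto
  show ?thesis
  proof (rule ccontr)
    assume "\<not> ?thesis"
    then have lt: "b - a > u - v" unfolding clip_delta_def v_def y_def by simp
    define a2 where "a2 = b - (u - v)"
    have a2: "a < a2" "a2 \<le> v" "0 \<le> a2" using lt ab v unfolding a2_def by auto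
    have "\<psi> u - \<psi> v \<le> \<psi> b - \<psi> a2"
      using concave_incr[OF cc a2(3) a2(2), of "u - v"] a2 ab v unfolding a2_def by simp
    moreover have "\<psi> a < \<psi> a2" using sm a2 ab strict_mono_onD by fastforce
    ultimately have "\<psi> u - \<psi> v < \<sigma>" using d by simp
    then have "y = \<psi> 0" using v unfolding y_def by auto
    then have "v = 0" using v smo_inj[OF sm, of v 0] by simp
    then show False using a2 ab by simp
  qed
qed

lemma sens:
  assumes nf: "neighbor_function \<psi>" and x: "0 \<le> x1" "0 \<le> x2" and u: "0 \<le> u" and s: "0 \<le> \<sigma>"
    and d: "\<bar>\<psi> x1 - \<psi> x2\<bar> \<le> \<sigma>"
  shows "\<bar>min x1 u - min x2 u\<bar> \<le> clip_delta \<psi> \<sigma> u"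
proof -
  have sm: "strict_mono_on {0..} \<psi>" using nf unfolding neighbor_function_def by auto
  have mono: "\<psi> x \<le> \<psi> y" if "0 \<le> x" "x \<le> y" for x y
    using sm that by (metis atLeast_iff order.trans order_le_less order_refl strict_mono_onD)
  have gen: "min p u - min q u \<le> clip_delta \<psi> \<sigma> u"
    if pq: "0 \<le> p" "0 \<le> q" "\<bar>\<psi> p - \<psi> q\<bar> \<le> \<sigma>" for p q
  proof (cases "min q u \<le> min p u")
    case True
    have "\<psi> (min p u) - \<psi> (min q u) \<le> \<sigma>"
    proof (cases "p \<le> u")
      case True
      show ?thesis
      proof (cases "q \<le> u")
        case True
        with \<open>min q u \<le> min p u\<close> \<open>p \<le> u\<close> have "q \<le> p" by auto
        then show ?thesis using True \<open>p \<le> u\<close> pq by auto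
      next
        case False
        with \<open>min q u \<le> min p u\<close> \<open>p \<le> u\<close> have "p = u" by auto
        then show ?thesis using False s by auto
      qed
    next
      case False
      then have "\<psi> u \<le> \<psi> p" using mono u by simp
      moreover have "\<psi> (min q u) = (if q \<le> u then \<psi> q else \<psi> u)" by simp
      ultimately show ?thesis using False pq s by (auto split: if_splits)
    qed
    then show ?thesis using sens_ord[OF nf _ True _ s] pq u by simp
  next
    case False
    have "0 \<le> clip_delta \<psi> \<sigma> u" using sens_ord[of \<psi> u u u \<sigma>] nf u s by simp
    then show ?thesis using False by simp
  qed
  show ?thesis using gen[OF x d] gen[OF x(2,1)] d by (auto simp: abs_minus_commute)
qed


definition FF :: "('g \<Rightarrow> real) \<Rightarrow> ('g \<Rightarrow> real) \<Rightarrow> 'g \<Rightarrow> (real \<times> real) measure" where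
  "FF s c g = distr (gaussian (c g) (s g)) (borel \<Otimes>\<^sub>M borel) (\<lambda>y. (y, (s g)\<^sup>2))"

lemma gaussian_sets: "sets (gaussian c s) = sets borel"
  by (simp add: gaussian_def)

lemma gaussian_prob: "prob_space (gaussian c s)"
proof -
  have "normal_density c s = normal_density c \<bar>s\<bar>" by (simp add: normal_density_def fun_eq_iff)
  then show ?thesis
    unfolding gaussian_def using prob_space_normal_density[of "\<bar>s\<bar>" c] by (auto intro: prob_space_return)
qed

lemma FF_meas: "(\<lambda>y::real. (y, t)) \<in> measurable (gaussian c s) (borel \<Otimes>\<^sub>M borel)"
  by (subst measurable_cong_sets[OF gaussian_sets refl]) simp

lemma FF_prob: "prob_space (FF s c g)"
  unfolding FF_def by (rule prob_space.prob_space_distr[OF gaussian_prob FF_meas])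

lemma FF_sets: "sets (FF s c g) = sets (borel \<Otimes>\<^sub>M borel)"
  unfolding FF_def by simp

lemma FF_psf: "product_sigma_finite (FF s c)"
proof (rule product_sigma_finite.intro)
  fix g show "sigma_finite_measure (FF s c g)" by (rule prob_space_imp_sigma_finite[OF FF_prob])
qed

definition lr :: "real \<Rightarrow> real \<Rightarrow> real \<Rightarrow> real \<Rightarrow> real" where
  "lr s c1 c2 x = exp (((c2 - c1)/s) * ((x - c1)/s) - ((c2 - c1)/s)^2/2)"

lemma lr_meas[measurable]: "lr s c1 c2 \<in> borel_measurable borel"
  unfolding lr_def by measurable

lemma normal_lr: assumes "s > 0"
  shows "normal_density c1 s x * lr s c1 c2 x = normal_density c2 s x"
proof -
  have "-(x - c1)\<^sup>2/ (2 * s\<^sup>2) + (((c2 - c1)/s) * ((x - c1)/s) - ((c2 - c1)/s)^2/2) = -(x - c2)\<^sup>2/ (2 * s\<^sup>2)"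
    using assms by (simp add: field_simps power2_eq_square)
  then show ?thesis unfolding normal_density_def lr_def
    by (simp add: exp_add[symmetric] mult.assoc)
qed

lemma FF_density:
  assumes s: "s g > 0"
  shows "FF s (c(g := c2)) g = density (FF s c g) (\<lambda>p. ennreal (lr (s g) (c g) c2 (fst p)))"
proof -
  have m: "(\<lambda>y::real. (y, (s g)\<^sup>2)) \<in> measurable lborel (borel \<Otimes>\<^sub>M borel)" by simp
  have "density (FF s c g) (\<lambda>p. ennreal (lr (s g) (c g) c2 (fst p)))
     = distr (density (density lborel (normal_density (c g) (s g))) (\<lambda>y. ennreal (lr (s g) (c g) c2 y)))
         (borel \<Otimes>\<^sub>M borel) (\<lambda>y. (y, (s g)\<^sup>2))"
    unfolding FF_def gaussian_def using s
    by (subst density_distr) auto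
  also have "\<dots> = distr (density lborel (normal_density c2 (s g))) (borel \<Otimes>\<^sub>M borel) (\<lambda>y. (y, (s g)\<^sup>2))"
    using s by (subst density_density_eq) (auto simp: normal_lr ennreal_mult'[symmetric])
  finally show ?thesis unfolding FF_def gaussian_def using s by simp
qed

lemma prod_ind:
  assumes "\<omega> \<in> extensional I" "finite I"
  shows "(\<Prod>g\<in>I. indicator (A g) (\<omega> g) :: ennreal) = indicator (Pi\<^sub>E I A) \<omega>"
proof (cases "\<forall>g\<in>I. \<omega> g \<in> A g")
  case True then show ?thesis using assms by (simp add: indicator_def PiE_iff)
next
  case False
  then obtain g where "g \<in> I" "\<omega> g \<notin> A g" by auto
  with assms show ?thesis
    by (auto simp: indicator_def PiE_iff intro!: prod_zero)
qed

lemma PiM_density: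
  assumes I: "finite I" and g0: "g0 \<in> I" and s: "s g0 > 0"
  shows "PiM I (FF s (c(g0 := c2))) =
         density (PiM I (FF s c)) (\<lambda>\<omega>. ennreal (lr (s g0) (c g0) c2 (fst (\<omega> g0))))"
    (is "_ = density ?P ?L")
proof -
  interpret p2: product_sigma_finite "FF s (c(g0 := c2))" by (rule FF_psf)
  interpret p1: product_sigma_finite "FF s c" by (rule FF_psf)
  have ssame: "sets (FF s (c(g0 := c2)) g) = sets (FF s c g)" for g by (simp add: FF_sets)
  have Ps: "sets (PiM I (FF s (c(g0 := c2)))) = sets ?P"
    by (rule sets_PiM_cong) (auto simp: FF_sets)
  have lm: "(\<lambda>p. ennreal (lr (s g0) (c g0) c2 (fst p))) \<in> borel_measurable (FF s c g0)"
    by (subst measurable_cong_sets[OF FF_sets refl]) simp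
  have Lm[measurable]: "?L \<in> borel_measurable ?P"
  proof (rule measurable_compose[where f="\<lambda>\<omega>. \<omega> g0" and N="FF s c g0"])
    show "(\<lambda>\<omega>. \<omega> g0) \<in> measurable ?P (FF s c g0)" using g0 by simp
    show "(\<lambda>p. ennreal (lr (s g0) (c g0) c2 (fst p))) \<in> borel_measurable (FF s c g0)"
      by (subst measurable_cong_sets[OF FF_sets refl]) simp
  qed
  show ?thesis
  proof (rule p2.PiM_eqI[OF I, symmetric])
    show "sets (density ?P ?L) = sets (PiM I (FF s (c(g0 := c2))))" using Ps by simp
  next
    fix A assume A: "\<And>i. i \<in> I \<Longrightarrow> A i \<in> sets (FF s (c(g0 := c2)) i)"
    define h where "h g x = indicator (A g) x * (if g = g0 then ennreal (lr (s g0) (c g0) c2 (fst x)) else 1)" for g x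
    have A1: "A g \<in> sets (FF s c g)" if "g \<in> I" for g using A[OF that] ssame by simp
    have hm: "h g \<in> borel_measurable (FF s c g)" if "g \<in> I" for g
    proof -
      have [measurable]: "A g \<in> sets (borel \<Otimes>\<^sub>M borel)" using A1[OF that] by (simp add: FF_sets)
      show ?thesis unfolding h_def by (subst measurable_cong_sets[OF FF_sets refl]) measurable
    qed
    have PiEs: "Pi\<^sub>E I A \<in> sets ?P" using A1 by (intro sets_PiM_I_finite[OF I]) auto
    have "emeasure (density ?P ?L) (Pi\<^sub>E I A) = (\<integral>\<^sup>+ \<omega>. ?L \<omega> * indicator (Pi\<^sub>E I A) \<omega> \<partial>?P)"
      using PiEs by (subst emeasure_density) auto
    also have "\<dots> = (\<integral>\<^sup>+ \<omega>. (\<Prod>g\<in>I. h g (\<omega> g)) \<partial>?P)"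
    proof (rule nn_integral_cong)
      fix \<omega> assume "\<omega> \<in> space ?P"
      then have ex: "\<omega> \<in> extensional I" by (simp add: space_PiM PiE_def)
      have "(\<Prod>g\<in>I. h g (\<omega> g)) = (\<Prod>g\<in>I. indicator (A g) (\<omega> g)) *
              (\<Prod>g\<in>I. (if g = g0 then ennreal (lr (s g0) (c g0) c2 (fst (\<omega> g))) else 1))"
        unfolding h_def by (rule prod.distrib)
      also have "(\<Prod>g\<in>I. (if g = g0 then ennreal (lr (s g0) (c g0) c2 (fst (\<omega> g))) else 1)) = ?L \<omega>"
        using I g0 by (simp add: prod.delta)
      finally show "?L \<omega> * indicator (Pi\<^sub>E I A) \<omega> = (\<Prod>g\<in>I. h g (\<omega> g))"
        using prod_ind[OF ex I, of A] by (simp add: mult.commute)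
    qed
    also have "\<dots> = (\<Prod>g\<in>I. integral\<^sup>N (FF s c g) (h g))"
      by (rule p1.product_nn_integral_prod[OF I hm])
    also have "\<dots> = (\<Prod>g\<in>I. emeasure (FF s (c(g0 := c2)) g) (A g))"
    proof (rule prod.cong[OF refl])
      fix g assume gI: "g \<in> I"
      show "integral\<^sup>N (FF s c g) (h g) = emeasure (FF s (c(g0 := c2)) g) (A g)"
      proof (cases "g = g0")
        case True
        then show ?thesis unfolding h_def using FF_density[of s g0 c c2] s A1[OF gI]
          by (simp add: emeasure_density[OF lm] mult.commute)
      next
        case False
        then have "FF s (c(g0 := c2)) g = FF s c g" by (simp add: FF_def)
        then show ?thesis unfolding h_def using False A1[OF gI] by simp
      qed
    qed
    finally show "emeasure (density ?P ?L) (Pi\<^sub>E I A) = (\<Prod>i\<in>I. emeasure (FF s (c(g0 := c2)) i) (A i))" .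
  qed
qed

lemma PiM_distributed:
  assumes I: "finite I" and g0: "g0 \<in> I" and s: "s g0 > 0"
  shows "distributed (PiM I (FF s c)) lborel (\<lambda>\<omega>. fst (\<omega> g0)) (normal_density (c g0) (s g0))"
proof -
  have m1: "(\<lambda>\<omega>. \<omega> g0) \<in> measurable (PiM I (FF s c)) (FF s c g0)" using g0 by simp
  have m2: "fst \<in> measurable (FF s c g0) lborel"
    by (simp add: measurable_cong_sets[OF FF_sets refl])
  have "distr (PiM I (FF s c)) lborel (\<lambda>\<omega>. fst (\<omega> g0))
      = distr (distr (PiM I (FF s c)) (FF s c g0) (\<lambda>\<omega>. \<omega> g0)) lborel fst"
    using m1 m2 by (subst distr_distr) (auto simp: comp_def)
  also have "\<dots> = distr (FF s c g0) lborel fst"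
    using distr_PiM_component[of I "FF s c" g0, OF FF_prob g0] by simp
  also have "\<dots> = distr (density lborel (normal_density (c g0) (s g0))) lborel (fst \<circ> (\<lambda>y. (y, (s g0)\<^sup>2)))"
    unfolding FF_def gaussian_def using s by (subst distr_distr) (auto simp: m2[unfolded FF_def gaussian_def])
  also have "\<dots> = density lborel (normal_density (c g0) (s g0))"
    by (simp add: comp_def distr_id2)
  finally show ?thesis unfolding distributed_def using m1 m2 by auto
qed


lemma distributed_prob:
  assumes "distributed P lborel X (normal_density c s)" "s > 0"
  shows "prob_space P"
proof (rule prob_spaceI)
  have m: "X \<in> measurable P lborel" and d: "distr P lborel X = density lborel (normal_density c s)"
    using assms unfolding distributed_def by auto
  have "emeasure P (space P) = emeasure (distr P lborel X) UNIV"
    using m by (subst emeasure_distr) (auto simp: vimage_def Int_def measurable_space)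
  also have "\<dots> = emeasure (density lborel (normal_density c s)) UNIV" using d by simp
  also have "\<dots> = 1" using prob_space.emeasure_space_1[OF prob_space_normal_density[of s c]] assms by simp
  finally show "emeasure P (space P) = 1" .
qed

lemma std_affine:
  assumes "distributed P lborel X (normal_density c s)" "s > 0" "\<alpha> = 1/s \<or> \<alpha> = -1/s"
  shows "distributed P lborel (\<lambda>\<omega>. -\<alpha>*c + \<alpha> * X \<omega>) std_normal_density"
proof -
  interpret prob_space P by (rule distributed_prob[OF assms(1,2)])
  have an: "\<alpha> \<noteq> 0" using assms by auto
  have a1: "\<bar>\<alpha>\<bar> * s = 1" using assms(2,3) by (auto simp: abs_minus_cancel)
  have a0: "-\<alpha>*c + \<alpha>*c = 0" by simp
  from normal_density_affine[OF assms(1) assms(2) an, of "-\<alpha>*c"]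
  show ?thesis unfolding a1 a0 .
qed

lemma final:
  assumes s: "s > 0" and d1: "distributed P lborel X (normal_density c1 s)"
    and d2: "distributed P' lborel X (normal_density c2 s)"
    and Pd: "P' = density P (\<lambda>\<omega>. ennreal (lr s c1 c2 (X \<omega>)))"
    and cd: "\<bar>c2 - c1\<bar> \<le> s * \<mu>" and S: "S \<in> sets P"
  shows "Phi_inv (measure P' S) \<le> Phi_inv (measure P S) + ereal \<mu>"
proof -
  have PP: "prob_space P" by (rule distributed_prob[OF d1 s])
  define d where "d = (c2 - c1) / s"
  have dm: "\<bar>d\<bar> \<le> \<mu>" using cd s unfolding d_def by (simp add: abs_div pos_divide_le_eq mult.commute)
  show ?thesis
  proof (cases "d \<le> 0")
    case True
    define \<alpha> where "\<alpha> = 1 / s"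
    define e where "e = - d"
    have Z: "distributed P lborel (\<lambda>\<omega>. -\<alpha>*c1 + \<alpha> * X \<omega>) std_normal_density"
      by (rule std_affine[OF d1 s]) (simp add: \<alpha>_def)
    have Z2: "distributed P' lborel (\<lambda>\<omega>. -\<alpha>*c2 + \<alpha> * X \<omega>) std_normal_density"
      by (rule std_affine[OF d2 s]) (simp add: \<alpha>_def)
    have eq1: "(\<lambda>\<omega>. -\<alpha>*c2 + \<alpha> * X \<omega>) = (\<lambda>\<omega>. (-\<alpha>*c1 + \<alpha> * X \<omega>) + e)"
      unfolding \<alpha>_def e_def d_def using s by (auto simp: field_simps)
    have eq2: "(\<lambda>\<omega>. ennreal (lr s c1 c2 (X \<omega>))) = (\<lambda>\<omega>. ennreal (exp (- e * (-\<alpha>*c1 + \<alpha> * X \<omega>) - e^2/2)))"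
      unfolding lr_def \<alpha>_def e_def d_def using s by (auto simp: field_simps)
    show ?thesis
      by (rule NP[OF PP Z, of P' e]) (use Z2 eq1 eq2 Pd True dm S e_def in auto)
  next
    case False
    define \<alpha> where "\<alpha> = - 1 / s"
    define e where "e = d"
    have Z: "distributed P lborel (\<lambda>\<omega>. -\<alpha>*c1 + \<alpha> * X \<omega>) std_normal_density"
      by (rule std_affine[OF d1 s]) (simp add: \<alpha>_def)
    have Z2: "distributed P' lborel (\<lambda>\<omega>. -\<alpha>*c2 + \<alpha> * X \<omega>) std_normal_density"
      by (rule std_affine[OF d2 s]) (simp add: \<alpha>_def)
    have eq1: "(\<lambda>\<omega>. -\<alpha>*c2 + \<alpha> * X \<omega>) = (\<lambda>\<omega>. (-\<alpha>*c1 + \<alpha> * X \<omega>) + e)"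
      unfolding \<alpha>_def e_def d_def using s by (auto simp: field_simps)
    have eq2: "(\<lambda>\<omega>. ennreal (lr s c1 c2 (X \<omega>))) = (\<lambda>\<omega>. ennreal (exp (- e * (-\<alpha>*c1 + \<alpha> * X \<omega>) - e^2/2)))"
      unfolding lr_def \<alpha>_def e_def d_def using s by (auto simp: field_simps)
    show ?thesis
      by (rule NP[OF PP Z, of P' e]) (use Z2 eq1 eq2 Pd False dm S e_def in auto)
  qed
qed


theorem theorem6p9:
  fixes \<psi> :: "real \<Rightarrow> real" and \<sigma> :: "nat \<Rightarrow> real" and \<mu> :: real and m i :: nat
    and G :: "'p \<Rightarrow> 'g" and E :: "'e set" and u :: "'e \<Rightarrow> nat \<Rightarrow> real"
  assumes "neighbor_function \<psi>"
    and "\<forall>k\<in>{1..m}. 0 \<le> \<sigma> k"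
    and "0 < \<mu>"
    and "i \<in> {1..m}"
    and "finite E"
    and "\<forall>j\<in>E. 0 \<le> u j i"
  shows "gaussian_EDP (pnc_mechanism \<psi> \<sigma> \<mu> G E u i) \<mu> \<psi> m \<sigma> E"
proof -
  note nf = assms(1) and sig = assms(2) and mu = assms(3) and iin = assms(4) and fin = assms(5)
    and unn = assms(6)
  show ?thesis unfolding gaussian_EDP_def
  proof (intro allI impI ballI)
    fix D1 D2 :: "'e \<Rightarrow> 'p erecord" and S
    assume H: "valid_dataset m E D1 \<and> valid_dataset m E D2 \<and> psi_neighbors \<psi> m \<sigma> E D1 D2"
      and S: "S \<in> sets (pnc_mechanism \<psi> \<sigma> \<mu> G E u i D1)"
    from H obtain j where jE: "j \<in> E" and agree: "\<forall>k\<in>E - {j}. D1 k = D2 k"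
      and close: "psi_close \<psi> m \<sigma> (D1 j) (D2 j)"
      unfolding psi_neighbors_def by auto
    have pub: "fst (D1 k) = fst (D2 k)" if "k \<in> E" for k
      using agree close that unfolding psi_close_def by (cases "k = j") auto
    have gm: "group_members G E D2 = group_members G E D1"
      unfolding group_members_def using pub by (auto simp: fun_eq_iff)
    have gl: "group_labels G E D2 = group_labels G E D1"
      unfolding group_labels_def using pub by (auto simp: image_def)
    have us: "u_star G E u i D2 = u_star G E u i D1"
      unfolding u_star_def gm ..
    define I where "I = group_labels G E D1"
    define sf where "sf g = clip_delta \<psi> (\<sigma> i) (u_star G E u i D1 g) / \<mu>" for g
    define c1 where "c1 g = clipped_total G E u i D1 g" for g
    define c2 where "c2 g = clipped_total G E u i D2 g" for g
    have M1: "pnc_mechanism \<psi> \<sigma> \<mu> G E u i D1 = PiM I (FF sf c1)"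
      unfolding pnc_mechanism_def FF_def Let_def I_def sf_def c1_def ..
    have M2: "pnc_mechanism \<psi> \<sigma> \<mu> G E u i D2 = PiM I (FF sf c2)"
      unfolding pnc_mechanism_def FF_def Let_def I_def sf_def c2_def gl us ..
    have finI: "finite I" unfolding I_def group_labels_def using fin by simp
    define g0 where "g0 = G (fst (D1 j))"
    have g0I: "g0 \<in> I" unfolding I_def g0_def group_labels_def using jE by auto
    define Mem where "Mem = group_members G E D1 g0"
    define U where "U = u_star G E u i D1 g0"
    have jM: "j \<in> Mem" unfolding Mem_def group_members_def g0_def using jE by auto
    have finM: "finite Mem" unfolding Mem_def group_members_def using fin by simp
    have MemE: "Mem \<subseteq> E" unfolding Mem_def group_members_def by auto
    have U0: "0 \<le> U"
    proof -
      have "u j i \<le> U" unfolding U_def u_star_def Mem_def[symmetric] using finM jM by simp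
      then show ?thesis using unn jE by force
    qed
    have c2eq: "c2 = c1(g0 := c2 g0)"
    proof
      fix g show "c2 g = (c1(g0 := c2 g0)) g"
      proof (cases "g = g0")
        case False
        have "j \<notin> group_members G E D1 g" using False unfolding group_members_def g0_def by auto
        then have "\<forall>k\<in>group_members G E D1 g. D1 k = D2 k"
          using agree unfolding group_members_def by auto
        then show ?thesis using False unfolding c1_def c2_def clipped_total_def gm us
          by (auto intro!: sum.cong)
      qed simp
    qed
    have x1: "0 \<le> snd (D1 j) i" and x2: "0 \<le> snd (D2 j) i"
      using H jE iin unfolding valid_dataset_def by auto
    have dps: "\<bar>\<psi> (snd (D1 j) i) - \<psi> (snd (D2 j) i)\<bar> \<le> \<sigma> i"
      using close iin unfolding psi_close_def by auto
    have si: "0 \<le> \<sigma> i" using sig iin by auto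
    have rest: "(\<Sum>k\<in>Mem - {j}. min (snd (D1 k) i) U) = (\<Sum>k\<in>Mem - {j}. min (snd (D2 k) i) U)"
    proof (rule sum.cong[OF refl])
      fix k assume "k \<in> Mem - {j}"
      then have "D1 k = D2 k" using agree MemE by blast
      then show "min (snd (D1 k) i) U = min (snd (D2 k) i) U" by simp
    qed
    have c1e: "c1 g0 = min (snd (D1 j) i) U + (\<Sum>k\<in>Mem - {j}. min (snd (D1 k) i) U)"
      unfolding c1_def clipped_total_def Mem_def[symmetric] U_def[symmetric]
      using sum.remove[OF finM jM] by simp
    have c2e: "c2 g0 = min (snd (D2 j) i) U + (\<Sum>k\<in>Mem - {j}. min (snd (D2 k) i) U)"
      unfolding c2_def clipped_total_def gm us Mem_def[symmetric] U_def[symmetric]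
      using sum.remove[OF finM jM] by simp
    have diff: "\<bar>c2 g0 - c1 g0\<bar> \<le> clip_delta \<psi> (\<sigma> i) U"
      using sens[OF nf x1 x2 U0 si dps] c1e c2e rest by (simp add: abs_minus_commute)
    show "Phi_inv (measure (pnc_mechanism \<psi> \<sigma> \<mu> G E u i D2) S)
          \<le> Phi_inv (measure (pnc_mechanism \<psi> \<sigma> \<mu> G E u i D1) S) + ereal \<mu>"
    proof (cases "c2 g0 = c1 g0")
      case True
      then have "c2 = c1" using c2eq by simp
      then have "pnc_mechanism \<psi> \<sigma> \<mu> G E u i D2 = pnc_mechanism \<psi> \<sigma> \<mu> G E u i D1" using M1 M2 by simp
      moreover have "x \<le> x + ereal \<mu>" for x using mu by (cases x) auto
      ultimately show ?thesis by simp
    next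
      case False
      then have "clip_delta \<psi> (\<sigma> i) U > 0" using diff by linarith
      then have s0: "sf g0 > 0" unfolding sf_def U_def using mu by simp
      have cd: "\<bar>c2 g0 - c1 g0\<bar> \<le> sf g0 * \<mu>" using diff mu unfolding sf_def U_def by simp
      have Pd: "PiM I (FF sf c2) = density (PiM I (FF sf c1)) (\<lambda>\<omega>. ennreal (lr (sf g0) (c1 g0) (c2 g0) (fst (\<omega> g0))))"
        using PiM_density[of I g0 sf c1 "c2 g0", OF finI g0I s0] c2eq by simp
      have d1: "distributed (PiM I (FF sf c1)) lborel (\<lambda>\<omega>. fst (\<omega> g0)) (normal_density (c1 g0) (sf g0))"
        by (rule PiM_distributed[OF finI g0I, of sf, OF s0])
      have d2: "distributed (PiM I (FF sf c2)) lborel (\<lambda>\<omega>. fst (\<omega> g0)) (normal_density (c2 g0) (sf g0))"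
        by (rule PiM_distributed[OF finI g0I, of sf, OF s0])
      show ?thesis unfolding M1 M2
        by (rule final[OF s0 d1 d2 Pd cd]) (use S M1 in simp)
    qed
  qed
qed

end
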